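(* Fix $t\in\mathbb{C}$, $t\neq0$, and four-end tangles $T_1,T_2$. (i) Let $\rho$ be a trace-$t$ representation of $T_1*_vT_2$ with $u(\rho)\notin\{2,t^2-2\}$, and let $\dot u_i=\dot u(\rho|_{T_i})$, $\check u_i=\check u(\rho|_{T_i})$. Then $\dot{\mathbf{g}}=\mathbf{e}$ (where $\dot{\mathbf{g}}=\mathbf{x}^{\mathrm{ne}}\mathbf{x}^{\mathrm{se}}$ for $\rho$ on $T_1*_vT_2$) if and only if $\dot u_1=\dot u_2$ and $\check u_1+\check u_2=0$. (ii) Let $\rho$ be a trace-$t$ representation of $T_1*_hT_2$ with $\dot u(\rho)\notin\{2,t^2-2\}$, and let $u_i=u(\rho|_{T_i})$, $\check u_i=\check u(\rho|_{T_i})$. Then $\mathbf{g}=\mathbf{e}$ (where $\mathbf{g}=\mathbf{x}^{\mathrm{nw}}\mathbf{x}^{\mathrm{ne}}$ for $\rho$ on $T_1*_hT_2$) if and only if $u_1=u_2$ and $\check u_1+\check u_2=0$.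
   Context: $G=\mathrm{SL}(2,\mathbb{C})$, $\mathbf{e}$ the identity, $G(t)=\{\mathbf{x}\in G:\mathrm{tr}\,\mathbf{x}=t\}$. A four-end tangle $T$ is a tangle diagram in a disk (a 1-submanifold of a 3-ball $B$ meeting $\partial B$ in four points) with endpoints at the northwest, northeast, southwest, southeast; the end arcs, directed outward, are $T^{\mathrm{nw}},T^{\mathrm{ne}},T^{\mathrm{sw}},T^{\mathrm{se}}$. A representation of $T$ is a map $\rho$ from directed arcs to $G$ with $\rho(a^{-1})=\rho(a)^{-1}$ satisfying the Wirtinger relation $\rho(c)=\rho(a)\rho(b)\rho(a)^{-1}$ at each crossing (over-arc $a$); equivalently a homomorphism $\pi_1(B\setminus T)\to G$. It is trace-$t$ if every $\rho(a)\in G(t)$. With $\mathbf{x}^{\mathrm{ot}}=\rho(T^{\mathrm{ot}})$: $u=\mathrm{tr}(\mathbf{x}^{\mathrm{nw}}\mathbf{x}^{\mathrm{ne}})$, $\dot u=\mathrm{tr}(\mathbf{x}^{\mathrm{ne}}\mathbf{x}^{\mathrm{se}})$, $\check u=\mathrm{tr}(\mathbf{x}^{\mathrm{nw}}\mathbf{x}^{\mathrm{se}})-\mathrm{tr}(\mathbf{x}^{\mathrm{sw}}\mathbf{x}^{\mathrm{ne}})$. Vertical composition $T_1*_vT_2$: $T_1$ above $T_2$, SW (resp. SE) endpoint of $T_1$ joined to NW (resp. NE) endpoint of $T_2$. Horizontal composition $T_1*_hT_2$: $T_1$ left of $T_2$, NE (resp. SE) endpoint of $T_1$ joined to NW (resp.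 SW) endpoint of $T_2$. $\rho|_{T_i}$ denotes restriction. (Representations with $\dot{\mathbf{g}}=\mathbf{e}$, resp. $\mathbf{g}=\mathbf{e}$, are exactly representations of the denominator closure $D(T)$, joining NW to SW and NE to SE, resp. numerator closure $N(T)$, joining NW to NE and SW to SE.) *)

theory Defs
  imports "HOL-Analysis.Analysis"
begin

type_synonym mat2 = "complex^2^2"

definition SLtr :: "complex \<Rightarrow> mat2 \<Rightarrow> bool" where
  "SLtr t A \<longleftrightarrow> det A = 1 \<and> trace A = t"

text \<open>Four-end tangle diagrams in Morse (level) form, read from bottom to top.
  Each level is a row of strand points numbered 0,1,... from left to right.
  Cross i: the strand from bottom position i goes to top position i+1 OVER the strand
  from bottom position i+1 to top position i.  CrossInv i: the mirror crossing.
  Cup i: a minimum creating two new points at positions i, i+1.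
  Cap i: a maximum joining points i and i+1.\<close>

datatype tstep = Cross nat | CrossInv nat | Cup nat | Cap nat

fun tdiag_width :: "nat \<Rightarrow> tstep list \<Rightarrow> nat option" where
  "tdiag_width n [] = Some n"
| "tdiag_width n (Cross i # T) = (if Suc i < n then tdiag_width n T else None)"
| "tdiag_width n (CrossInv i # T) = (if Suc i < n then tdiag_width n T else None)"
| "tdiag_width n (Cup i # T) = (if i \<le> n then tdiag_width (n + 2) T else None)"
| "tdiag_width n (Cap i # T) = (if Suc i < n then tdiag_width (n - 2) T else None)"

text \<open>A four-end tangle diagram: two ends at the bottom (SW, SE), two at the top (NW, NE).\<close>
definition four_end_tangle :: "tstep list \<Rightarrow> bool" where
  "four_end_tangle T \<longleftrightarrow> tdiag_width 2 T = Some 2"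

text \<open>Labels: each strand point at a level carries the value of rho on the arc through it,
  directed upward.  Wirtinger relations at crossings; the reverse direction gets the inverse
  (at cups and caps the arc turns around).\<close>

fun wstep :: "tstep \<Rightarrow> mat2 list \<Rightarrow> mat2 list \<Rightarrow> bool" where
  "wstep (Cross i) s s' \<longleftrightarrow> Suc i < length s \<and>
      s' = s[i := s!i ** s!(Suc i) ** matrix_inv (s!i), Suc i := s!i]"
| "wstep (CrossInv i) s s' \<longleftrightarrow> Suc i < length s \<and>
      s' = s[i := s!(Suc i), Suc i := matrix_inv (s!(Suc i)) ** s!i ** s!(Suc i)]"
| "wstep (Cup i) s s' \<longleftrightarrow> i \<le> length s \<and>
      (\<exists>x. s' = take i s @ [x, matrix_inv x] @ drop i s)"
| "wstep (Cap i) s s' \<longleftrightarrow> Suc i < length s \<and> s!(Suc i) = matrix_inv (s!i) \<and>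
      s' = take i s @ drop (Suc (Suc i)) s"

text \<open>A trace-t representation of the diagram T: the list of label rows at all levels.\<close>
definition is_trace_rep :: "complex \<Rightarrow> tstep list \<Rightarrow> mat2 list list \<Rightarrow> bool" where
  "is_trace_rep t T ss \<longleftrightarrow> length ss = Suc (length T) \<and> length (ss!0) = 2 \<and>
     (\<forall>k<length T. wstep (T!k) (ss!k) (ss!(Suc k))) \<and>
     (\<forall>s\<in>set ss. \<forall>x\<in>set s. SLtr t x)"

text \<open>Values on the end arcs, directed outward.\<close>
definition x_nw :: "mat2 list list \<Rightarrow> mat2" where "x_nw ss = last ss ! 0"
definition x_ne :: "mat2 list list \<Rightarrow> mat2" where "x_ne ss = last ss ! 1"
definition x_sw :: "mat2 list list \<Rightarrow> mat2" where "x_sw ss = matrix_inv (hd ss ! 0)"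
definition x_se :: "mat2 list list \<Rightarrow> mat2" where "x_se ss = matrix_inv (hd ss ! 1)"

definition u_inv :: "mat2 list list \<Rightarrow> complex" where
  "u_inv ss = trace (x_nw ss ** x_ne ss)"
definition udot_inv :: "mat2 list list \<Rightarrow> complex" where
  "udot_inv ss = trace (x_ne ss ** x_se ss)"
definition ucheck_inv :: "mat2 list list \<Rightarrow> complex" where
  "ucheck_inv ss = trace (x_nw ss ** x_se ss) - trace (x_sw ss ** x_ne ss)"

text \<open>Vertical composition: T1 above T2.\<close>
definition vcomp :: "tstep list \<Rightarrow> tstep list \<Rightarrow> tstep list" where
  "vcomp T1 T2 = T2 @ T1"
definition vres1 :: "tstep list \<Rightarrow> tstep list \<Rightarrow> mat2 list list \<Rightarrow> mat2 list list" where
  "vres1 T1 T2 ss = drop (length T2) ss"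
definition vres2 :: "tstep list \<Rightarrow> tstep list \<Rightarrow> mat2 list list \<Rightarrow> mat2 list list" where
  "vres2 T1 T2 ss = take (Suc (length T2)) ss"

fun shift_step :: "nat \<Rightarrow> tstep \<Rightarrow> tstep" where
  "shift_step k (Cross i) = Cross (i + k)"
| "shift_step k (CrossInv i) = CrossInv (i + k)"
| "shift_step k (Cup i) = Cup (i + k)"
| "shift_step k (Cap i) = Cap (i + k)"

text \<open>Horizontal composition: T1 left of T2; a cup joins SE of T1 to SW of T2, a cap joins
  NE of T1 to NW of T2.\<close>
definition hcomp :: "tstep list \<Rightarrow> tstep list \<Rightarrow> tstep list" where
  "hcomp T1 T2 = [Cup 1] @ T1 @ map (shift_step 2) T2 @ [Cap 1]"
definition hres1 :: "tstep list \<Rightarrow> tstep list \<Rightarrow> mat2 list list \<Rightarrow> mat2 list list" where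
  "hres1 T1 T2 ss = map (\<lambda>s. take (length s - 2) s) (take (Suc (length T1)) (drop 1 ss))"
definition hres2 :: "tstep list \<Rightarrow> tstep list \<Rightarrow> mat2 list list \<Rightarrow> mat2 list list" where
  "hres2 T1 T2 ss = map (drop 2) (take (Suc (length T2)) (drop (Suc (length T1)) ss))"

end

theory Submission
  imports Defs
begin

definition adj2 :: "mat2 \<Rightarrow> mat2" where "adj2 X = mat (trace X) - X"

lemmas ent = vec_eq_iff forall_2 matrix_matrix_mult_def sum_2 trace_def det_2 mat_def adj2_def

lemma comps:
  "(X ** Y)$1$1 = X$1$1*Y$1$1 + X$1$2*Y$2$1" "(X ** Y)$1$2 = X$1$1*Y$1$2 + X$1$2*Y$2$2"
  "(X ** Y)$2$1 = X$2$1*Y$1$1 + X$2$2*Y$2$1" "(X ** Y)$2$2 = X$2$1*Y$1$2 + X$2$2*Y$2$2"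
  "(adj2 X)$1$1 = X$2$2" "(adj2 X)$1$2 = - X$1$2" "(adj2 X)$2$1 = - X$2$1" "(adj2 X)$2$2 = X$1$1"
  "trace X = X$1$1 + X$2$2" "(X - Y)$i$j = X$i$j - Y$i$j" "(X + Y)$i$j = X$i$j + Y$i$j"
  "(0::mat2)$i$j = 0"
  by (simp_all add: ent)

lemma adj2_right: "X ** adj2 X = mat (det X)"
  by (simp add: ent algebra_simps)
lemma adj2_left: "adj2 X ** X = mat (det X)"
  by (simp add: ent algebra_simps)

lemma inv_adj: assumes "det X = 1" shows "matrix_inv X = adj2 X"
proof -
  have ex: "\<exists>A'. X ** A' = mat 1 \<and> A' ** X = mat 1"
    using adj2_right[of X] adj2_left[of X] assms by auto
  define M where "M = matrix_inv X"
  have M: "X ** M = mat 1 \<and> M ** X = mat 1"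
    unfolding M_def matrix_inv_def by (rule someI_ex[OF ex])
  have "M = M ** (X ** adj2 X)" using adj2_right[of X] assms by simp
  also have "\<dots> = (M ** X) ** adj2 X" by (simp add: matrix_mul_assoc)
  also have "\<dots> = adj2 X" using M by simp
  finally show ?thesis unfolding M_def .
qed

lemma tr_adj: "trace (adj2 X) = trace X" and det_adj: "det (adj2 X) = det X" and adj_adj: "adj2 (adj2 X) = X"
  and adj_mul: "adj2 (X ** Y) = adj2 Y ** adj2 X"
  by (simp_all add: ent algebra_simps)


lemma lin_final:
  fixes g Q S :: mat2
  assumes dg: "det g = 1" and dQ: "det Q = 1" and tQ: "trace Q = t" and hP: "trace (g ** adj2 Q) = t"
    and E0: "trace S = 0" and E1: "trace (g ** S) = 0" and E2: "trace (Q ** S) = 0"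
    and E3: "trace (g ** Q ** S) = 0"
    and K: "(trace g - 2) * (trace g + 2 - t^2) \<noteq> 0"
  shows "S = 0"
proof -
  have "(trace g - 2) * (trace g + 2 - t^2) * S$1$1 = 0"
    using dg dQ tQ hP E0 E1 E2 E3 by (simp add: ent) algebra
  moreover have "(trace g - 2) * (trace g + 2 - t^2) * S$1$2 = 0"
    using dg dQ tQ hP E0 E1 E2 E3 by (simp add: ent) algebra
  moreover have "(trace g - 2) * (trace g + 2 - t^2) * S$2$1 = 0"
    using dg dQ tQ hP E0 E1 E2 E3 by (simp add: ent) algebra
  moreover have "(trace g - 2) * (trace g + 2 - t^2) * S$2$2 = 0"
    using dg dQ tQ hP E0 E1 E2 E3 by (simp add: ent) algebra
  ultimately show ?thesis using K by (simp add: vec_eq_iff forall_2)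
qed

lemma core_rev:
  fixes g Q B C :: mat2
  assumes dg: "det g = 1" and dQ: "det Q = 1" and dB: "det B = 1"
    and tQ: "trace Q = t" and tB: "trace B = t" and tC: "trace C = t"
    and hA: "trace (g ** adj2 B) = t" and hP: "trace (g ** adj2 Q) = t"
    and hD: "trace (adj2 C ** adj2 g) = t"
    and c1: "trace (B ** adj2 Q) = trace (Q ** C)"
    and c2: "trace (g ** adj2 B ** adj2 Q) - trace (Q ** adj2 g ** B) + trace (g ** adj2 Q ** C)
              - trace (adj2 C ** adj2 g ** Q) = 0"
    and K: "(trace g - 2) * (trace g + 2 - t^2) \<noteq> 0"
  shows "C = adj2 B"
proof -
  define S where "S = C - adj2 B"
  have E0: "trace S = 0" using tB tC unfolding S_def by (simp add: trace_sub tr_adj)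
  have E1: "trace (g ** S) = 0" using tB[symmetric] tC[symmetric] hA[symmetric] hD[symmetric]
    unfolding S_def comps by algebra
  have E2: "trace (Q ** S) = 0" using tB[symmetric] tC[symmetric] tQ[symmetric] c1
    unfolding S_def comps by algebra
  have E3: "trace (g ** Q ** S) = 0" using tB[symmetric] tC[symmetric] tQ[symmetric] c1 c2 E1 E2
    unfolding S_def comps by algebra
  have "S = 0" by (rule lin_final[OF dg dQ tQ hP E0 E1 E2 E3 K])
  then show ?thesis unfolding S_def by simp
qed

lemma core_fwd:
  fixes g Q B :: mat2
  shows "trace (B ** adj2 Q) = trace (Q ** adj2 B)"
    and "trace (g ** adj2 B ** adj2 Q) - trace (Q ** adj2 g ** B) + trace (g ** adj2 Q ** adj2 B)
              - trace (adj2 (adj2 B) ** adj2 g ** Q) = 0"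
  unfolding comps by algebra+

lemma inv_unique: "X ** Y = mat 1 \<Longrightarrow> det Y = 1 \<Longrightarrow> X = adj2 Y"
  by (metis adj2_right matrix_mul_assoc matrix_mul_lid matrix_mul_rid)
lemma inv_unique_r: "Y ** X = mat 1 \<Longrightarrow> det Y = 1 \<Longrightarrow> X = adj2 Y"
  by (metis adj2_left matrix_mul_assoc matrix_mul_lid matrix_mul_rid)

lemma core:
  fixes A B C D P Q P' Q' :: mat2
  assumes dA: "det A = 1" and dB: "det B = 1" and dC: "det C = 1" and dD: "det D = 1"
    and dP: "det P = 1" and dQ: "det Q = 1"
    and tA: "trace A = t" and tB: "trace B = t" and tC: "trace C = t" and tD: "trace D = t"
    and tP: "trace P = t" and tQ: "trace Q = t"
    and h1: "A ** B ** Q' ** P' = mat 1" and h2: "P ** Q ** C ** D = mat 1"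
    and h3: "Q' ** Q = mat 1" and h4: "P' ** P = mat 1"
    and hu: "trace (A ** B) \<notin> {2, t^2 - 2}"
  shows "B ** C = mat 1 \<longleftrightarrow> (trace (B ** Q') = trace (Q ** C) \<and>
     trace (A ** Q') - trace (P' ** B) + trace (P ** C) - trace (D ** Q) = 0)"
proof -
  have Q'eq: "Q' = adj2 Q" by (rule inv_unique[OF h3 dQ])
  have P'eq: "P' = adj2 P" by (rule inv_unique[OF h4 dP])
  obtain g where g: "g = P ** Q" by blast
  have dg: "det g = 1" using g dP dQ by (simp add: det_mul)
  have inv1: "(Q' ** P') ** g = mat 1"
    using h3 h4 g by (metis matrix_mul_assoc matrix_mul_lid)
  have AB: "A ** B = g"
  proof -
    have "A ** B = (A ** B) ** ((Q' ** P') ** g)" using inv1 by simp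
    also have "\<dots> = g" using h1 by (metis matrix_mul_assoc matrix_mul_lid)
    finally show ?thesis .
  qed
  have Aeq: "A = g ** adj2 B"
    using AB adj2_right[of B] dB by (metis matrix_mul_assoc matrix_mul_rid)
  have Peq: "P = g ** adj2 Q"
    using g adj2_right[of Q] dQ by (metis matrix_mul_assoc matrix_mul_rid)
  have adjg: "adj2 g = Q' ** P'" using g Q'eq P'eq adj_mul by simp
  have CD: "C ** D = adj2 g"
  proof -
    have "C ** D = ((Q' ** P') ** g) ** (C ** D)" using inv1 by simp
    also have "\<dots> = Q' ** P'" using h2 g by (metis matrix_mul_assoc matrix_mul_rid)
    finally show ?thesis using adjg by simp
  qed
  have Deq: "D = adj2 C ** adj2 g"
    using CD adj2_left[of C] dC by (metis matrix_mul_assoc matrix_mul_lid)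
  have P'eq2: "P' = Q ** adj2 g" using P'eq Peq adj_mul adj_adj by simp
  have hA: "trace (g ** adj2 B) = t" using tA Aeq by simp
  have hP: "trace (g ** adj2 Q) = t" using tP Peq by simp
  have hD: "trace (adj2 C ** adj2 g) = t" using tD Deq by simp
  have k1: "trace g - 2 \<noteq> 0" using hu AB by auto
  have k2: "trace g + 2 - t^2 \<noteq> 0"
  proof
    assume z: "trace g + 2 - t^2 = 0"
    have "trace g = (trace g + 2 - t^2) + (t^2 - 2)" by (simp add: algebra_simps)
    then have "trace g = t^2 - 2" using z by simp
    then show False using hu AB by auto
  qed
  have K: "(trace g - 2) * (trace g + 2 - t^2) \<noteq> 0" using k1 k2 by simp
  have trA: "trace (A ** Q') = trace (g ** adj2 B ** adj2 Q)" using Aeq Q'eq by simp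
  have trP': "trace (P' ** B) = trace (Q ** adj2 g ** B)" using P'eq2 by simp
  have trP: "trace (P ** C) = trace (g ** adj2 Q ** C)" using Peq by simp
  have trD: "trace (D ** Q) = trace (adj2 C ** adj2 g ** Q)" using Deq by simp
  show ?thesis
  proof
    assume BC: "B ** C = mat 1"
    have Ceq: "C = adj2 B" by (rule inv_unique_r[OF BC dB])
    show "trace (B ** Q') = trace (Q ** C) \<and>
     trace (A ** Q') - trace (P' ** B) + trace (P ** C) - trace (D ** Q) = 0"
      unfolding trA trP' trP trD using core_fwd Q'eq Ceq by simp
  next
    assume H: "trace (B ** Q') = trace (Q ** C) \<and>
     trace (A ** Q') - trace (P' ** B) + trace (P ** C) - trace (D ** Q) = 0"
    have c1: "trace (B ** adj2 Q) = trace (Q ** C)" using H Q'eq by simp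
    have c2: "trace (g ** adj2 B ** adj2 Q) - trace (Q ** adj2 g ** B) + trace (g ** adj2 Q ** C)
              - trace (adj2 C ** adj2 g ** Q) = 0" using H unfolding trA trP' trP trD by simp
    have "C = adj2 B" by (rule core_rev[OF dg dQ dB tQ tB tC hA hP hD c1 c2 K])
    then show "B ** C = mat 1" using adj2_right[of B] dB by simp
  qed
qed

definition rowprod :: "mat2 list \<Rightarrow> mat2" where "rowprod s = foldr (**) s (mat 1)"

lemma rowprod_Nil[simp]: "rowprod [] = mat 1" by (simp add: rowprod_def)
lemma rowprod_Cons[simp]: "rowprod (x # s) = x ** rowprod s" by (simp add: rowprod_def)
lemma rowprod_append[simp]: "rowprod (a @ b) = rowprod a ** rowprod b"
  by (induct a) (simp_all add: matrix_mul_assoc)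

lemma split2: "Suc i < length s \<Longrightarrow> s = take i s @ [s!i, s!Suc i] @ drop (Suc (Suc i)) s"
  by (simp add: Cons_nth_drop_Suc)

lemma upd2: assumes "Suc i < length s"
  shows "s[i := a, Suc i := b] = take i s @ [a, b] @ drop (Suc (Suc i)) s"
proof -
  have "s[i := a, Suc i := b] = (take i s @ [s!i, s!Suc i] @ drop (Suc (Suc i)) s)[i := a, Suc i := b]"
    using split2[OF assms] by metis
  also have "\<dots> = take i s @ [a, b] @ drop (Suc (Suc i)) s"
    using assms by (simp add: list_update_append)
  finally show ?thesis .
qed

lemma inv_l: fixes x :: mat2 assumes "det x = 1" shows "matrix_inv x ** x = mat 1"
  using adj2_left[of x] by (simp add: inv_adj[OF assms] assms)
lemma inv_r: fixes x :: mat2 assumes "det x = 1" shows "x ** matrix_inv x = mat 1"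
  using adj2_right[of x] by (simp add: inv_adj[OF assms] assms)

lemma inv_l': fixes x :: mat2 assumes "det x = 1" shows "matrix_inv x ** (x ** D) = D"
  by (simp add: matrix_mul_assoc inv_l[OF assms])
lemma inv_r': fixes x :: mat2 assumes "det x = 1" shows "x ** (matrix_inv x ** D) = D"
  by (simp add: matrix_mul_assoc inv_r[OF assms])

lemma rowprod_split2: assumes "Suc i < length s"
  shows "rowprod s = rowprod (take i s) ** (s!i) ** (s!Suc i) ** rowprod (drop (Suc (Suc i)) s)"
proof -
  have "rowprod s = rowprod (take i s @ [s!i, s!Suc i] @ drop (Suc (Suc i)) s)"
    using arg_cong[where f=rowprod, OF split2[OF assms]] .
  then show ?thesis by (simp add: matrix_mul_assoc)
qed

lemma rowprod_upd2: assumes "Suc i < length s"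
  shows "rowprod (s[i := a, Suc i := b]) = rowprod (take i s) ** a ** b ** rowprod (drop (Suc (Suc i)) s)"
  unfolding upd2[OF assms] by (simp add: matrix_mul_assoc)

lemma step_local:
  assumes w: "wstep (shift_step j st) (l @ s @ r) s2" and lj: "length l = j" and ln: "length s = n"
    and tw: "tdiag_width n [st] = Some n'"
    and d1: "\<forall>x\<in>set (l @ s @ r). det x = 1" and d2: "\<forall>x\<in>set s2. det x = 1"
  shows "\<exists>s'. s2 = l @ s' @ r \<and> length s' = n' \<and> rowprod s' = rowprod s"
proof (cases st)
  case (Cross i)
  have i: "Suc i < n" and n': "n' = n" using tw Cross by (auto split: if_splits)
  let ?x = "s!i" and ?y = "s!Suc i"
  have nth1: "(l @ s @ r) ! (i + j) = ?x" "(l @ s @ r) ! Suc (i + j) = ?y"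
    using i lj ln by (simp_all add: nth_append)
  have s2: "s2 = (l @ s @ r)[i + j := ?x ** ?y ** matrix_inv ?x, Suc (i + j) := ?x]"
    using w Cross nth1 by simp
  have s2': "s2 = l @ s[i := ?x ** ?y ** matrix_inv ?x, Suc i := ?x] @ r"
    unfolding s2 using i lj ln by (simp add: list_update_append)
  have dx: "det ?x = 1" using d1 i ln by simp
  have "rowprod (s[i := ?x ** ?y ** matrix_inv ?x, Suc i := ?x]) = rowprod s"
    unfolding rowprod_upd2[OF i[folded ln]] rowprod_split2[OF i[folded ln]]
    by (simp add: matrix_mul_assoc[symmetric] inv_l'[OF dx])
  then show ?thesis using s2' n' i ln by auto
next
  case (CrossInv i)
  have i: "Suc i < n" and n': "n' = n" using tw CrossInv by (auto split: if_splits)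
  let ?x = "s!i" and ?y = "s!Suc i"
  have nth1: "(l @ s @ r) ! (i + j) = ?x" "(l @ s @ r) ! Suc (i + j) = ?y"
    using i lj ln by (simp_all add: nth_append)
  have s2: "s2 = (l @ s @ r)[i + j := ?y, Suc (i + j) := matrix_inv ?y ** ?x ** ?y]"
    using w CrossInv nth1 by simp
  have s2': "s2 = l @ s[i := ?y, Suc i := matrix_inv ?y ** ?x ** ?y] @ r"
    unfolding s2 using i lj ln by (simp add: list_update_append)
  have dy: "det ?y = 1" using d1 i ln by simp
  have "rowprod (s[i := ?y, Suc i := matrix_inv ?y ** ?x ** ?y]) = rowprod s"
    unfolding rowprod_upd2[OF i[folded ln]] rowprod_split2[OF i[folded ln]]
    by (simp add: matrix_mul_assoc[symmetric] inv_r'[OF dy])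
  then show ?thesis using s2' n' i ln by auto
next
  case (Cup i)
  have i: "i \<le> n" and n': "n' = n + 2" using tw Cup by (auto split: if_splits)
  obtain x where s2: "s2 = take (i + j) (l @ s @ r) @ [x, matrix_inv x] @ drop (i + j) (l @ s @ r)"
    using w Cup by auto
  have s2': "s2 = l @ (take i s @ [x, matrix_inv x] @ drop i s) @ r"
    unfolding s2 using i lj ln by simp
  have dx: "det x = 1" using d2 s2 by simp
  have "rowprod (take i s @ [x, matrix_inv x] @ drop i s) = rowprod (take i s) ** rowprod (drop i s)"
    by (simp add: matrix_mul_assoc[symmetric] inv_r'[OF dx])
  also have "\<dots> = rowprod s" by (metis append_take_drop_id rowprod_append)
  finally have "rowprod (take i s @ [x, matrix_inv x] @ drop i s) = rowprod s" .
  then show ?thesis using s2' n' i ln by auto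
next
  case (Cap i)
  have i: "Suc i < n" and n': "n' = n - 2" using tw Cap by (auto split: if_splits)
  have nth1: "(l @ s @ r) ! (i + j) = s!i" "(l @ s @ r) ! Suc (i + j) = s!Suc i"
    using i lj ln by (simp_all add: nth_append)
  have inv: "s!Suc i = matrix_inv (s!i)" and s2: "s2 = take (i + j) (l @ s @ r) @ drop (Suc (Suc (i + j))) (l @ s @ r)"
    using w Cap nth1 by auto
  have s2': "s2 = l @ (take i s @ drop (Suc (Suc i)) s) @ r"
    unfolding s2 using i lj ln by simp
  have dx: "det (s!i) = 1" using d1 i ln by simp
  have "rowprod (take i s @ drop (Suc (Suc i)) s) = rowprod s"
    unfolding rowprod_split2[OF i[folded ln]]
    using inv by (simp add: matrix_mul_assoc[symmetric] inv_r'[OF dx])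
  then show ?thesis using s2' n' i ln by auto
qed

lemma tw_cons: "tdiag_width n (st # T) = Some m \<Longrightarrow>
   \<exists>n'. tdiag_width n [st] = Some n' \<and> tdiag_width n' T = Some m"
  by (cases st) (auto split: if_splits)

lemma chain_local:
  "tdiag_width n T = Some m \<Longrightarrow> (\<forall>k<length T. wstep (shift_step j (T!k)) (f k) (f (Suc k))) \<Longrightarrow>
   f 0 = l @ s @ r \<Longrightarrow> length l = j \<Longrightarrow> length s = n \<Longrightarrow>
   (\<forall>k\<le>length T. \<forall>x\<in>set (f k). det x = 1) \<Longrightarrow>
   \<exists>s'. f (length T) = l @ s' @ r \<and> length s' = m \<and> rowprod s' = rowprod s"
proof (induction T arbitrary: n s f)
  case Nil
  then show ?case by auto
next
  case (Cons st T)
  obtain n' where tw1: "tdiag_width n [st] = Some n'" and tw2: "tdiag_width n' T = Some m"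
    using tw_cons[OF Cons.prems(1)] by blast
  have w0: "wstep (shift_step j st) (l @ s @ r) (f 1)"
    using Cons.prems(2)[rule_format, of 0] Cons.prems(3) by simp
  have d0: "\<forall>x\<in>set (l @ s @ r). det x = 1" using Cons.prems(6)[rule_format, of 0] Cons.prems(3) by simp
  have d1: "\<forall>x\<in>set (f 1). det x = 1" using Cons.prems(6)[rule_format, of 1] by simp
  obtain s1 where s1: "f 1 = l @ s1 @ r" "length s1 = n'" "rowprod s1 = rowprod s"
    using step_local[OF w0 Cons.prems(4,5) tw1 d0 d1] by blast
  have "\<exists>s'. (\<lambda>k. f (Suc k)) (length T) = l @ s' @ r \<and> length s' = m \<and> rowprod s' = rowprod s1"
  proof (rule Cons.IH[OF tw2])
    show "\<forall>k<length T. wstep (shift_step j (T ! k)) (f (Suc k)) (f (Suc (Suc k)))"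
    proof (intro allI impI)
      fix k assume "k < length T"
      then show "wstep (shift_step j (T ! k)) (f (Suc k)) (f (Suc (Suc k)))"
        using Cons.prems(2)[rule_format, of "Suc k"] by simp
    qed
    show "f (Suc 0) = l @ s1 @ r" using s1 by simp
    show "length l = j" "length s1 = n'" using Cons.prems(4) s1 by auto
    show "\<forall>k\<le>length T. \<forall>x\<in>set (f (Suc k)). det x = 1"
    proof (intro allI impI)
      fix k assume "k \<le> length T"
      then show "\<forall>x\<in>set (f (Suc k)). det x = 1"
        using Cons.prems(6)[rule_format, of "Suc k"] by simp
    qed
  qed
  then show ?case using s1 by auto
qed

lemma shift0[simp]: "shift_step 0 st = st" by (cases st) auto

lemma len2: "length s = 2 \<Longrightarrow> \<exists>a b. s = [a, b]"
  by (cases s; cases "tl s") auto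

lemma adjR[simp]: "det x = 1 \<Longrightarrow> x ** adj2 x = mat 1" by (simp add: adj2_right)
lemma adjL[simp]: "det x = 1 \<Longrightarrow> adj2 x ** x = mat 1" by (simp add: adj2_left)
lemma adjR': "det x = 1 \<Longrightarrow> x ** (adj2 x ** D) = D" by (simp add: matrix_mul_assoc)
lemma adjL': "det x = 1 \<Longrightarrow> adj2 x ** (x ** D) = D" by (simp add: matrix_mul_assoc)

lemma hd_td: "m < length xs \<Longrightarrow> hd (take (Suc k) (drop m xs)) = xs!m"
  by (simp add: hd_conv_nth)
lemma last_td: assumes "m + k < length xs" shows "last (take (Suc k) (drop m xs)) = xs!(m+k)"
proof -
  have "length (take (Suc k) (drop m xs)) = Suc k" using assms by simp
  then show ?thesis using assms by (simp add: last_conv_nth)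
qed


lemma part_i:
  assumes T1: "four_end_tangle T1" and T2: "four_end_tangle T2"
    and rep: "is_trace_rep t (vcomp T1 T2) ss" and hu: "u_inv ss \<notin> {2, t^2 - 2}"
  shows "x_ne ss ** x_se ss = mat 1 \<longleftrightarrow>
              udot_inv (vres1 T1 T2 ss) = udot_inv (vres2 T1 T2 ss) \<and>
              ucheck_inv (vres1 T1 T2 ss) + ucheck_inv (vres2 T1 T2 ss) = 0"
proof -
  have len: "length ss = Suc (length T2 + length T1)" and l0: "length (ss!0) = 2"
    and W: "\<And>k. k < length T2 + length T1 \<Longrightarrow> wstep ((T2 @ T1)!k) (ss!k) (ss!Suc k)"
    and SL: "\<forall>s\<in>set ss. \<forall>x\<in>set s. SLtr t x"
    using rep unfolding is_trace_rep_def vcomp_def by auto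
  have SLk: "\<And>k z. k \<le> length T2 + length T1 \<Longrightarrow> z \<in> set (ss!k) \<Longrightarrow> det z = 1 \<and> trace z = t"
    using SL len unfolding SLtr_def by (metis le_imp_less_Suc nth_mem)
  obtain mid where mid: "ss!(length T2) = [] @ mid @ []" "length mid = 2" "rowprod mid = rowprod (ss!0)"
  proof -
    have "\<exists>s'. (\<lambda>k. ss!k) (length T2) = [] @ s' @ [] \<and> length s' = 2 \<and> rowprod s' = rowprod (ss!0)"
    proof (rule chain_local)
      show "tdiag_width 2 T2 = Some 2" using T2 unfolding four_end_tangle_def .
      show "\<forall>k<length T2. wstep (shift_step 0 (T2 ! k)) (ss ! k) (ss ! Suc k)"
      proof (intro allI impI)
        fix k assume k: "k < length T2"
        then show "wstep (shift_step 0 (T2 ! k)) (ss ! k) (ss ! Suc k)"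
          using W[of k] by (simp add: nth_append)
      qed
      show "ss ! 0 = [] @ ss!0 @ []" by simp
      show "length [] = (0::nat)" "length (ss!0) = 2" using l0 by auto
      show "\<forall>k\<le>length T2. \<forall>x\<in>set (ss ! k). det x = 1"
      proof (intro allI impI ballI)
        fix k x assume "k \<le> length T2" "x \<in> set (ss ! k)"
        then show "det x = 1" using SLk[of k x] by simp
      qed
    qed
    then show ?thesis using that by auto
  qed
  obtain top where top: "ss!(length T2 + length T1) = [] @ top @ []" "length top = 2" "rowprod top = rowprod mid"
  proof -
    have "\<exists>s'. (\<lambda>k. ss!(length T2 + k)) (length T1) = [] @ s' @ [] \<and> length s' = 2 \<and> rowprod s' = rowprod mid"
    proof (rule chain_local)
      show "tdiag_width 2 T1 = Some 2" using T1 unfolding four_end_tangle_def .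
      show "\<forall>k<length T1. wstep (shift_step 0 (T1 ! k)) (ss ! (length T2 + k)) (ss ! (length T2 + Suc k))"
      proof (intro allI impI)
        fix k assume k: "k < length T1"
        then show "wstep (shift_step 0 (T1 ! k)) (ss ! (length T2 + k)) (ss ! (length T2 + Suc k))"
          using W[of "length T2 + k"] by (simp add: nth_append)
      qed
      show "ss ! (length T2 + 0) = [] @ mid @ []" using mid by simp
      show "length [] = (0::nat)" "length mid = 2" using mid by auto
      show "\<forall>k\<le>length T1. \<forall>x\<in>set (ss ! (length T2 + k)). det x = 1"
      proof (intro allI impI ballI)
        fix k x assume "k \<le> length T1" "x \<in> set (ss ! (length T2 + k))"
        then show "det x = 1" using SLk[of "length T2 + k" x] by simp
      qed
    qed
    then show ?thesis using that by auto
  qed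
  obtain a0 b0 where r0: "ss!0 = [a0, b0]" using len2[OF l0] by blast
  obtain p q where rm: "mid = [p, q]" using len2[OF mid(2)] by blast
  obtain c d where rt: "top = [c, d]" using len2[OF top(2)] by blast
  have sa: "det a0 = 1 \<and> trace a0 = t" "det b0 = 1 \<and> trace b0 = t" using SLk[of 0] r0 by auto
  have sp: "det p = 1 \<and> trace p = t" "det q = 1 \<and> trace q = t" using SLk[of "length T2"] mid(1) rm by auto
  have sc: "det c = 1 \<and> trace c = t" "det d = 1 \<and> trace d = t" using SLk[of "length T2 + length T1"] top(1) rt by auto
  have pq: "p ** q = a0 ** b0" using mid(3) r0 rm by simp
  have cd: "c ** d = p ** q" using top(3) rm rt by simp
  have ne: "ss \<noteq> []" using len by auto
  have "last ss = ss ! (length T2 + length T1)" using len last_conv_nth[OF ne] by simp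
  then have lastss: "last ss = [c, d]" using top(1) rt by simp
  have hdss: "hd ss = [a0, b0]" using r0 hd_conv_nth[OF ne] by simp
  have v1: "hd (vres1 T1 T2 ss) = [p, q]" "last (vres1 T1 T2 ss) = [c, d]"
    unfolding vres1_def using len mid(1) rm lastss by (simp_all add: hd_drop_conv_nth)
  have v2: "hd (vres2 T1 T2 ss) = [a0, b0]" "last (vres2 T1 T2 ss) = [p, q]"
    unfolding vres2_def using len mid(1) rm hdss last_td[of 0 "length T2" ss] by simp_all
  have cc: "\<And>Z. c ** (d ** Z) = p ** (q ** Z)" by (metis cd matrix_mul_assoc)
  have pp: "\<And>Z. p ** (q ** Z) = a0 ** (b0 ** Z)" by (metis pq matrix_mul_assoc)
  have h1: "c ** d ** adj2 q ** adj2 p = mat 1"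
    using sp by (simp add: matrix_mul_assoc[symmetric] cc adjR')
  have h2: "p ** q ** adj2 b0 ** adj2 a0 = mat 1"
    using sa by (simp add: matrix_mul_assoc[symmetric] pp adjR')
  have hu': "trace (c ** d) \<notin> {2, t^2 - 2}" using hu lastss unfolding u_inv_def x_nw_def x_ne_def by simp
  have C: "d ** adj2 b0 = mat 1 \<longleftrightarrow> (trace (d ** adj2 q) = trace (q ** adj2 b0) \<and>
     trace (c ** adj2 q) - trace (adj2 p ** d) + trace (p ** adj2 b0) - trace (adj2 a0 ** q) = 0)"
    by (rule core[OF conjunct1[OF sc(1)] conjunct1[OF sc(2)] _ _ conjunct1[OF sp(1)] conjunct1[OF sp(2)]
          conjunct2[OF sc(1)] conjunct2[OF sc(2)] _ _ conjunct2[OF sp(1)] conjunct2[OF sp(2)] h1 h2 _ _ hu'])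
       (use sa sp in \<open>simp_all add: det_adj tr_adj\<close>)
  show ?thesis
    unfolding udot_inv_def ucheck_inv_def x_nw_def x_ne_def x_sw_def x_se_def v1 v2 lastss hdss
    using C sa sp by (simp add: inv_adj algebra_simps)
qed

lemma part_ii:
  assumes T1: "four_end_tangle T1" and T2: "four_end_tangle T2"
    and rep: "is_trace_rep t (hcomp T1 T2) ss" and hu: "udot_inv ss \<notin> {2, t^2 - 2}"
  shows "x_nw ss ** x_ne ss = mat 1 \<longleftrightarrow>
              u_inv (hres1 T1 T2 ss) = u_inv (hres2 T1 T2 ss) \<and>
              ucheck_inv (hres1 T1 T2 ss) + ucheck_inv (hres2 T1 T2 ss) = 0"
proof -
  define n1 where "n1 = length T1"
  define n2 where "n2 = length T2"
  have len: "length ss = Suc (Suc (Suc (n1 + n2)))" and l0: "length (ss!0) = 2"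
    and W: "\<And>k. k < Suc (Suc (n1 + n2)) \<Longrightarrow> wstep (hcomp T1 T2 ! k) (ss!k) (ss!Suc k)"
    and SL: "\<forall>s\<in>set ss. \<forall>x\<in>set s. SLtr t x"
    using rep unfolding is_trace_rep_def hcomp_def n1_def n2_def by auto
  have SLk: "\<And>k z. k \<le> Suc (Suc (n1 + n2)) \<Longrightarrow> z \<in> set (ss!k) \<Longrightarrow> det z = 1 \<and> trace z = t"
    using SL len unfolding SLtr_def by (metis le_imp_less_Suc nth_mem)
  have ix0: "hcomp T1 T2 ! 0 = Cup 1" unfolding hcomp_def by simp
  have ix1: "\<And>k. k < n1 \<Longrightarrow> hcomp T1 T2 ! Suc k = T1 ! k"
    unfolding hcomp_def n1_def by (simp add: nth_append)
  have ix2: "\<And>k. k < n2 \<Longrightarrow> hcomp T1 T2 ! Suc (n1 + k) = shift_step 2 (T2 ! k)"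
    unfolding hcomp_def n1_def n2_def by (simp add: nth_append)
  have ix3: "hcomp T1 T2 ! Suc (n1 + n2) = Cap 1"
    unfolding hcomp_def n1_def n2_def by (simp add: nth_append)
  obtain a b where r0: "ss!0 = [a, b]" using len2[OF l0] by blast
  obtain x where r1: "ss!1 = [a, x, matrix_inv x, b]"
    using W[of 0] ix0 r0 by auto
  obtain s1 where s1: "ss!(Suc n1) = [] @ s1 @ [matrix_inv x, b]" "length s1 = 2" "rowprod s1 = rowprod [a, x]"
  proof -
    have "\<exists>s'. (\<lambda>k. ss!(Suc k)) n1 = [] @ s' @ [matrix_inv x, b] \<and> length s' = 2 \<and> rowprod s' = rowprod [a, x]"
    proof (rule chain_local[where T=T1, folded n1_def])
      show "tdiag_width 2 T1 = Some 2" using T1 unfolding four_end_tangle_def .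
      show "\<forall>k<n1. wstep (shift_step 0 (T1 ! k)) (ss ! Suc k) (ss ! Suc (Suc k))"
      proof (intro allI impI)
        fix k assume k: "k < n1"
        then show "wstep (shift_step 0 (T1 ! k)) (ss ! Suc k) (ss ! Suc (Suc k))"
          using W[of "Suc k"] ix1[OF k] by simp
      qed
      show "ss ! Suc 0 = [] @ [a, x] @ [matrix_inv x, b]" using r1 by simp
      show "length [] = (0::nat)" "length [a, x] = 2" by auto
      show "\<forall>k\<le>n1. \<forall>z\<in>set (ss ! Suc k). det z = 1"
      proof (intro allI impI ballI)
        fix k z assume "k \<le> n1" "z \<in> set (ss ! Suc k)"
        then show "det z = 1" using SLk[of "Suc k" z] by simp
      qed
    qed
    then show ?thesis using that by auto
  qed
  obtain s2 where s2: "ss!(Suc (n1 + n2)) = s1 @ s2 @ []" "length s2 = 2" "rowprod s2 = rowprod [matrix_inv x, b]"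
  proof -
    have "\<exists>s'. (\<lambda>k. ss!(Suc (n1 + k))) n2 = s1 @ s' @ [] \<and> length s' = 2 \<and> rowprod s' = rowprod [matrix_inv x, b]"
    proof (rule chain_local[where T=T2, folded n2_def])
      show "tdiag_width 2 T2 = Some 2" using T2 unfolding four_end_tangle_def .
      show "\<forall>k<n2. wstep (shift_step 2 (T2 ! k)) (ss ! Suc (n1 + k)) (ss ! Suc (n1 + Suc k))"
      proof (intro allI impI)
        fix k assume k: "k < n2"
        then show "wstep (shift_step 2 (T2 ! k)) (ss ! Suc (n1 + k)) (ss ! Suc (n1 + Suc k))"
          using W[of "Suc (n1 + k)"] ix2[OF k] by simp
      qed
      show "ss ! Suc (n1 + 0) = s1 @ [matrix_inv x, b] @ []" using s1 by simp
      show "length s1 = 2" "length [matrix_inv x, b] = 2" using s1 by auto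
      show "\<forall>k\<le>n2. \<forall>z\<in>set (ss ! Suc (n1 + k)). det z = 1"
      proof (intro allI impI ballI)
        fix k z assume "k \<le> n2" "z \<in> set (ss ! Suc (n1 + k))"
        then show "det z = 1" using SLk[of "Suc (n1 + k)" z] by simp
      qed
    qed
    then show ?thesis using that by auto
  qed
  obtain c y where rs1: "s1 = [c, y]" using len2[OF s1(2)] by blast
  obtain y' d where rs2: "s2 = [y', d]" using len2[OF s2(2)] by blast
  have wc: "wstep (Cap 1) [c, y, y', d] (ss ! Suc (Suc (n1 + n2)))"
    using W[of "Suc (n1 + n2)"] ix3 s2(1) rs1 rs2 by simp
  then have y': "y' = matrix_inv y" and rlast: "ss ! Suc (Suc (n1 + n2)) = [c, d]" by auto
  have ne: "ss \<noteq> []" using len by auto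
  have "last ss = ss ! Suc (Suc (n1 + n2))" using len last_conv_nth[OF ne] by simp
  then have lastss: "last ss = [c, d]" using rlast by simp
  have hdss: "hd ss = [a, b]" using r0 hd_conv_nth[OF ne] by simp
  have h1: "hd (hres1 T1 T2 ss) = [a, x]" "last (hres1 T1 T2 ss) = [c, y]"
    unfolding hres1_def using len hd_td[of 1 ss "length T1"] last_td[of 1 "length T1" ss] r1 s1(1) rs1
    by (simp_all add: hd_map last_map n1_def)
  have h2: "hd (hres2 T1 T2 ss) = [matrix_inv x, b]" "last (hres2 T1 T2 ss) = [y', d]"
    unfolding hres2_def using len hd_td[of "Suc (length T1)" ss "length T2"]
      last_td[of "Suc (length T1)" "length T2" ss] s1(1) s2(1) rs1 rs2
    by (simp_all add: hd_map last_map n1_def n2_def)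
  have sa: "det a = 1 \<and> trace a = t" "det b = 1 \<and> trace b = t" using SLk[of 0] r0 by auto
  have sx: "det x = 1 \<and> trace x = t" using SLk[of 1] r1 by auto
  have sc: "det c = 1 \<and> trace c = t" "det y = 1 \<and> trace y = t"
    using SLk[of "Suc n1"] s1(1) rs1 by auto
  have sd: "det d = 1 \<and> trace d = t" using SLk[of "Suc (n1 + n2)"] s2(1) rs2 by auto
  have cy: "c ** y = a ** x" using s1(3) rs1 by simp
  have yd: "adj2 y ** d = adj2 x ** b" using s2(3) rs2 y' sc sx by (simp add: inv_adj)
  have cyZ: "\<And>Z. c ** (y ** Z) = a ** (x ** Z)" by (metis cy matrix_mul_assoc)
  have ydZ: "\<And>Z. adj2 y ** (d ** Z) = adj2 x ** (b ** Z)" by (metis yd matrix_mul_assoc)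
  have ab: "c ** d = a ** b"
  proof -
    have "c ** d = c ** (y ** (adj2 y ** d))" using adjR'[of y d] sc by simp
    also have "\<dots> = c ** (y ** (adj2 x ** b))" unfolding yd ..
    also have "\<dots> = a ** (x ** (adj2 x ** b))" by (rule cyZ)
    also have "\<dots> = a ** b" using adjR'[of x b] sx by simp
    finally show ?thesis .
  qed
  have cdZ: "\<And>Z. c ** (d ** Z) = a ** (b ** Z)" by (metis ab matrix_mul_assoc)
  have ac: "adj2 a ** c = b ** adj2 d"
  proof -
    have "adj2 a ** c = adj2 a ** (c ** (d ** adj2 d))" using sd by simp
    also have "\<dots> = b ** adj2 d" using adjL'[of a] sa by (simp add: cdZ)
    finally show ?thesis .
  qed
  have trh: "trace (adj2 a ** c) = trace (d ** adj2 b)" using ac core_fwd(1)[of b d] by simp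
  have hu': "trace (adj2 a ** c) \<notin> {2, t^2 - 2}"
    using hu lastss hdss sa trh unfolding udot_inv_def x_ne_def x_se_def by (simp add: inv_adj)
  have H1: "adj2 a ** c ** y ** adj2 x = mat 1"
    using sa sx by (simp add: matrix_mul_assoc[symmetric] cyZ adjL')
  have H2: "x ** adj2 y ** d ** adj2 b = mat 1"
    using sx sa by (simp add: matrix_mul_assoc[symmetric] ydZ adjR')
  have H3: "y ** adj2 y = mat 1" using sc by simp
  have H4: "adj2 x ** x = mat 1" using sx by simp
  have C: "c ** d = mat 1 \<longleftrightarrow> (trace (c ** y) = trace (adj2 y ** d) \<and>
     trace (adj2 a ** y) - trace (adj2 x ** c) + trace (x ** d) - trace (adj2 b ** adj2 y) = 0)"
    by (rule core[OF _ conjunct1[OF sc(1)] conjunct1[OF sd] _ conjunct1[OF sx] _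
          _ conjunct2[OF sc(1)] conjunct2[OF sd] _ conjunct2[OF sx] _ H1 H2 H3 H4 hu'])
       (use sa sc in \<open>simp_all add: det_adj tr_adj\<close>)
  have e1: "trace (c ** adj2 x) = trace (adj2 x ** c)" by (rule trace_mul_sym)
  have e2: "trace (adj2 y ** adj2 b) = trace (adj2 b ** adj2 y)" by (rule trace_mul_sym)
  show ?thesis
    unfolding u_inv_def ucheck_inv_def x_nw_def x_ne_def x_sw_def x_se_def h1 h2 lastss hdss y'
    using C sa sc sx e1 e2 by (simp add: inv_adj det_adj adj_adj algebra_simps) metis
qed
theorem mainTheorem5:
  fixes t :: complex and T1 T2 :: "tstep list"
  assumes "t \<noteq> 0" and "four_end_tangle T1" and "four_end_tangle T2"
  shows "(\<forall>ss. is_trace_rep t (vcomp T1 T2) ss \<and> u_inv ss \<notin> {2, t^2 - 2} \<longrightarrow>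
            (x_ne ss ** x_se ss = mat 1 \<longleftrightarrow>
              udot_inv (vres1 T1 T2 ss) = udot_inv (vres2 T1 T2 ss) \<and>
              ucheck_inv (vres1 T1 T2 ss) + ucheck_inv (vres2 T1 T2 ss) = 0))
       \<and> (\<forall>ss. is_trace_rep t (hcomp T1 T2) ss \<and> udot_inv ss \<notin> {2, t^2 - 2} \<longrightarrow>
            (x_nw ss ** x_ne ss = mat 1 \<longleftrightarrow>
              u_inv (hres1 T1 T2 ss) = u_inv (hres2 T1 T2 ss) \<and>
              ucheck_inv (hres1 T1 T2 ss) + ucheck_inv (hres2 T1 T2 ss) = 0))"
proof (intro conjI allI impI)
  fix ss assume "is_trace_rep t (vcomp T1 T2) ss \<and> u_inv ss \<notin> {2, t^2 - 2}"
  then show "x_ne ss ** x_se ss = mat 1 \<longleftrightarrow>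
              udot_inv (vres1 T1 T2 ss) = udot_inv (vres2 T1 T2 ss) \<and>
              ucheck_inv (vres1 T1 T2 ss) + ucheck_inv (vres2 T1 T2 ss) = 0"
    using part_i[OF assms(2,3)] by blast
next
  fix ss assume "is_trace_rep t (hcomp T1 T2) ss \<and> udot_inv ss \<notin> {2, t^2 - 2}"
  then show "x_nw ss ** x_ne ss = mat 1 \<longleftrightarrow>
              u_inv (hres1 T1 T2 ss) = u_inv (hres2 T1 T2 ss) \<and>
              ucheck_inv (hres1 T1 T2 ss) + ucheck_inv (hres2 T1 T2 ss) = 0"
    using part_ii[OF assms(2,3)] by blast
qed

end
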